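(* Let $t<1$. There exists a positive integer $N$, depending only on $t$, such that for every integer $n\ge N$ there exists an analytic function $f_n(z)=\sum_{k\ge 1} b_k z^k$ on $\mathbb{D}$ with non-negative Taylor coefficients, $f_n(0)=0$ and $\|f_n\|_{\mathcal{B}}\le 1$, satisfying $$ \mathcal{F}^t_n(f_n)=\sum_{k=1}^n k^t|b_k|^2 > n^t B_n^2. $$
   Context: $\mathbb{D}$ is the open unit disc. The Bloch space $\mathcal{B}$ consists of analytic functions $f$ on $\mathbb{D}$ with finite norm $\|f\|_{\mathcal{B}}=|f(0)|+\sup_{z\in\mathbb{D}}(1-|z|^2)|f'(z)|$. For $n\ge 2$, $B_n=\frac{n+1}{2n}\left(\frac{n+1}{n-1}\right)^{(n-1)/2}$. *)

theory Defs
  imports "HOL-Analysis.Analysis"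
begin

definition bloch :: "(complex \<Rightarrow> complex) \<Rightarrow> bool" where
  "bloch f \<longleftrightarrow> f holomorphic_on ball 0 1 \<and>
     bdd_above ((\<lambda>z. (1 - (norm z)\<^sup>2) * norm (deriv f z)) ` ball 0 1)"

definition bloch_norm :: "(complex \<Rightarrow> complex) \<Rightarrow> real" where
  "bloch_norm f = norm (f 0) + (SUP z\<in>ball 0 1. (1 - (norm z)\<^sup>2) * norm (deriv f z))"

text \<open>The constant B_n (meaningful for n \<ge> 2).\<close>
definition B_const :: "nat \<Rightarrow> real" where
  "B_const n = (real n + 1) / (2 * real n) *
      ((real n + 1) / (real n - 1)) powr ((real n - 1) / 2)"

end

theory Submission
  imports Defs
begin


lemma amgm:
  fixes k x :: real
  assumes k: "k > 0" and x: "0 < x" "x < 1"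
  shows "x powr k * (1 - x) \<le> (k/(k+1)) powr k * (1/(k+1))"
proof -
  define A where "A = (k+1)*x/k"
  define B where "B = (k+1)*(1-x)"
  have A: "A > 0" and B: "B > 0" using k x by (auto simp: A_def B_def)
  have "A powr (k/(k+1)) * B powr (1/(k+1)) \<le> (k/(k+1))*A + (1/(k+1))*B"
    by (rule Youngs_inequality_0) (use k A B in \<open>auto simp: field_simps\<close>)
  also have "\<dots> = 1"
  proof -
    have "(k/(k+1))*A = x" using k by (simp add: A_def)
    moreover have "(1/(k+1))*B = 1 - x" using k by (simp add: B_def)
    ultimately show ?thesis by simp
  qed
  finally have 1: "A powr (k/(k+1)) * B powr (1/(k+1)) \<le> 1" .
  have "(A powr (k/(k+1)) * B powr (1/(k+1))) powr (k+1) \<le> 1 powr (k+1)"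
    by (rule powr_mono2) (use 1 k A B in auto)
  also have "(A powr (k/(k+1)) * B powr (1/(k+1))) powr (k+1) = A powr k * B"
    using k A B by (simp add: powr_mult powr_powr)
  finally have 2: "A powr k * B \<le> 1" by simp
  have "A powr k = ((k+1)/k) powr k * x powr k"
    unfolding A_def using k x by (simp add: powr_mult[symmetric])
  hence "((k+1)/k) powr k * x powr k * ((k+1)*(1-x)) \<le> 1" using 2 by (simp add: B_def)
  moreover have "(k/(k+1)) powr k * ((k+1)/k) powr k = 1"
    using k by (simp add: powr_mult[symmetric])
  ultimately have 3: "(k/(k+1)) powr k * (((k+1)/k) powr k * x powr k * ((k+1)*(1-x))) \<le> (k/(k+1)) powr k * 1"
    by (intro mult_left_mono) auto
  have "x powr k * (1 - x) = ((k/(k+1)) powr k * (((k+1)/k) powr k * x powr k * ((k+1)*(1-x)))) / (k+1)"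
    using k `(k/(k+1)) powr k * ((k+1)/k) powr k = 1` by (simp add: field_simps)
  also have "\<dots> \<le> (k/(k+1)) powr k * 1 / (k+1)"
    by (rule divide_right_mono[OF 3]) (use k in auto)
  finally show ?thesis by simp
qed


lemma ring4: fixes c P n Q d :: real
  assumes "c*n*d = 1" shows "(c*P)*n*(Q*d) = P*Q"
proof -
  have "(c*P)*n*(Q*d) = (c*n*d)*(P*Q)" by (simp only: ac_simps)
  then show ?thesis using assms by simp
qed

lemma e: assumes n: "n \<ge> (2::nat)" shows "(real n + 1)/(2*real n) * real n * (2/(real n+1)) = 1"
proof -
  have a: "real n > 0" using n by simp
  have "(real n + 1)/(2*real n) * real n = (real n + 1)/2" using a by simp
  moreover have "(real n + 1)/2 * (2/(real n+1)) = 1" using a by simp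
  ultimately show ?thesis by simp
qed
lemma f: assumes n: "n \<ge> (2::nat)" shows "((real n + 1)/(real n - 1)) powr k * ((real n - 1)/(real n + 1)) powr k = 1"
proof -
  have a: "real n - 1 > 0" using n by simp
  have "((real n + 1)/(real n - 1)) * ((real n - 1)/(real n + 1)) = 1" using a by simp
  then show ?thesis by (simp add: powr_mult[symmetric])
qed

lemma Bn_bound:
  fixes r :: real
  assumes n: "n \<ge> 2" and r: "0 \<le> r" "r < 1"
  shows "B_const n * ((1 - r^2) * real n * r^(n-1)) \<le> 1"
proof (cases "r = 0")
  case True
  then show ?thesis using n by (simp add: power_0_left)
next
  case False
  hence rp: "r > 0" using r by auto
  define k where "k = (real n - 1)/2"
  define x where "x = r^2"
  have k: "k > 0" using n by (simp add: k_def)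
  have x: "0 < x" "x < 1" using rp r by (auto simp: x_def power_less_one_iff abs_square_less_1)
  have rp': "r^(n-1) = x powr k"
  proof -
    have "x powr k = (r powr 2) powr k" using rp by (simp add: x_def)
    also have "\<dots> = r powr (2*k)" by (simp add: powr_powr)
    also have "2*k = real (n-1)" using n by (simp add: k_def of_nat_diff)
    finally show ?thesis using rp powr_realpow[OF rp, of "n-1"] by simp
  qed
  have kk1: "k/(k+1) = (real n - 1)/(real n + 1)" unfolding k_def using n by (simp add: field_simps)
  have kk2: "1/(k+1) = 2/(real n + 1)" unfolding k_def using n by (simp add: field_simps)
  have am: "x powr k * (1 - x) \<le> ((real n - 1)/(real n + 1)) powr k * (2/(real n + 1))"
    using amgm[OF k x] kk1 kk2 by simp
  have Bp: "B_const n > 0" unfolding B_const_def using n by auto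
  have "B_const n * ((1 - r^2) * real n * r^(n-1)) = B_const n * real n * (x powr k * (1 - x))"
    unfolding rp' x_def[symmetric] by (simp add: mult_ac)
  also have "\<dots> \<le> B_const n * real n * (((real n - 1)/(real n + 1)) powr k * (2/(real n + 1)))"
    by (rule mult_left_mono[OF am]) (use Bp in auto)
  also have "\<dots> = ((real n + 1)/(real n - 1)) powr k * ((real n - 1)/(real n + 1)) powr k"
  proof -
    note e = e[OF n]
    show ?thesis unfolding B_const_def k_def[symmetric]
      by (rule ring4[OF e])
  qed
  also have "\<dots> = 1"
    by (rule f[OF n])
  finally show ?thesis .
qed


lemma asym:
  fixes t :: real assumes t: "t < 1"
  shows "\<exists>N\<ge>2. \<forall>n\<ge>N. 72 * real n powr (max t 0) * ln (6 * real n) < real n - 1"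
proof -
  define T where "T = max t 0"
  define e where "e = (1 - T)/2"
  have T: "0 \<le> T" "T < 1" using t by (auto simp: T_def)
  have e: "0 < e" "e \<le> 1/2" "T + 2*e = 1" using T by (auto simp: e_def field_simps)
  define C where "C = 864 / e"
  have C: "C > 0" using e by (simp add: C_def)
  define N where "N = max 2 (nat (ceiling (C powr (1/e))) + 1)"
  have "\<forall>n\<ge>N. 72 * real n powr T * ln (6 * real n) < real n - 1"
  proof (intro allI impI)
    fix n assume nN: "n \<ge> N"
    have n2: "n \<ge> 2" using nN by (simp add: N_def)
    have np: "real n > 0" using n2 by simp
    have "real n > C powr (1/e)" using nN unfolding N_def by linarith
    hence "real n powr e > (C powr (1/e)) powr e"
      by (intro powr_less_mono2) (use e in auto)
    also have "(C powr (1/e)) powr e = C" using e C by (simp add: powr_powr)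
    finally have nC: "real n powr e > C" .
    have "ln (6 * real n) \<le> (6 * real n) powr e / e"
      by (rule ln_powr_bound) (use n2 e in auto)
    also have "(6 * real n) powr e = 6 powr e * real n powr e" by (simp add: powr_mult)
    finally have l1: "ln (6 * real n) \<le> 6 powr e * real n powr e / e" .
    have "6 powr e \<le> 6 powr 1" using e by (intro powr_mono) auto
    hence "6 powr e * real n powr e / e \<le> 6 * real n powr e / e"
      using e by (intro divide_right_mono mult_right_mono) auto
    with l1 have l2: "ln (6 * real n) \<le> 6 * real n powr e / e" by linarith
    have nT: "real n powr T \<ge> 0" by simp
    have "72 * real n powr T * ln (6 * real n) \<le> 72 * real n powr T * (6 * real n powr e / e)"
      using l2 nT by (intro mult_left_mono) auto
    also have "\<dots> = (C / 2) * real n powr (T + e)"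
      using e by (simp add: C_def powr_add field_simps)
    also have "\<dots> < (real n powr e / 2) * real n powr (T + e)"
      using nC np by (intro mult_strict_right_mono) auto
    also have "\<dots> = real n powr (T + 2*e) / 2"
      by (simp add: powr_add[symmetric] algebra_simps)
    also have "\<dots> = real n / 2" using e np by simp
    also have "\<dots> \<le> real n - 1" using n2 by simp
    finally show "72 * real n powr T * ln (6 * real n) < real n - 1" .
  qed
  then show ?thesis unfolding T_def by (intro exI[of _ N]) (auto simp: N_def)
qed


lemma B_le3: assumes n: "n \<ge> 2" shows "B_const n \<le> 3" "B_const n > 0"
proof -
  define k where "k = (real n - 1)/2"
  have k: "k > 0" using n by (simp add: k_def)
  have n1: "real n - 1 > 0" using n by simp
  have "(real n + 1)/(real n - 1) = 1 + 2/(real n - 1)" using n1 by (simp add: field_simps)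
  also have "\<dots> \<le> exp (2/(real n - 1))" by simp
  finally have "((real n + 1)/(real n - 1)) powr k \<le> exp (2/(real n - 1)) powr k"
    using n1 k by (intro powr_mono2) auto
  also have "\<dots> = exp 1" using n1 by (simp add: powr_def k_def)
  finally have p: "((real n + 1)/(real n - 1)) powr k \<le> exp 1" .
  have q: "(real n + 1)/(2*real n) \<le> 1" using n by simp
  have "B_const n \<le> 1 * exp 1" unfolding B_const_def k_def[symmetric]
    by (rule mult_mono[OF q p]) auto
  then show "B_const n \<le> 3" using exp_le by simp
  show "B_const n > 0" unfolding B_const_def using n by auto
qed

lemma ring5: fixes x B s n y :: real
  shows "(1-x)*(1/2 + B*(1-s/2)*n*y) = (1-x)/2 + (1-s/2)*(B*((1-x)*n*y))"
  by (simp add: field_simps)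

lemma radial:
  fixes r s b :: real
  assumes n: "n \<ge> 2" and r: "0 \<le> r" "r < 1"
    and s: "0 < s" "s < 1" and sdef: "s = 2 * ln (6 * real n) / (real n - 1)"
    and b: "b = B_const n * (1 - s/2)"
  shows "(1 - r^2) * (1/2 + b * real n * r^(n-1)) \<le> 1"
proof -
  have B: "B_const n \<le> 3" "B_const n > 0" using B_le3[OF n] by auto
  have bp: "b \<ge> 0" using b B s by simp
  have r2: "r^2 \<le> 1" "0 \<le> r^2" using r by (auto simp: power_le_one)
  have main: "B_const n * ((1 - r^2) * real n * r^(n-1)) \<le> 1" by (rule Bn_bound[OF n r])
  show ?thesis
  proof (cases "r^2 \<ge> 1 - s")
    case True
    have "(1 - r^2) * (1/2 + b * real n * r^(n-1)) = (1 - r^2)/2 + (1 - s/2) * (B_const n * ((1 - r^2) * real n * r^(n-1)))"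
      unfolding b by (rule ring5)
    also have "\<dots> \<le> s/2 + (1 - s/2) * 1"
      using True main s by (intro add_mono mult_left_mono) auto
    finally show ?thesis by simp
  next
    case False
    have e1: "exp (-s/2) ^ 2 = exp (-s)" by (simp add: exp_double[symmetric] power2_eq_square exp_add[symmetric])
    have "r^2 < exp (-s/2) ^ 2" using False e1 exp_ge_add_one_self[of "-s"] by linarith
    hence re: "r < exp (-s/2)" by (rule power_less_imp_less_base) simp
    have "r^(n-1) \<le> exp (-s/2) ^ (n-1)" using re r by (intro power_mono) auto
    also have "\<dots> = exp (real (n-1) * (-s/2))" by (rule exp_of_nat_mult[symmetric])
    also have "real (n-1) * (-s/2) = - ln (6 * real n)" 
    proof -
      have "real n - 1 > 0" using n by simp
      then show ?thesis using n by (simp add: sdef of_nat_diff field_simps)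
    qed
    also have "exp (- ln (6 * real n)) = 1 / (6 * real n)" using n by (simp add: exp_minus inverse_eq_divide)
    finally have rn: "r^(n-1) \<le> 1 / (6 * real n)" .
    have "b * real n * r^(n-1) \<le> 3 * real n * (1 / (6 * real n))"
    proof (intro mult_mono)
      have "B_const n * (1 - s/2) \<le> B_const n * 1" using B s by (intro mult_left_mono) auto
      then show "b \<le> 3" using b B by linarith
    qed (use rn bp r in auto)
    also have "\<dots> = 1/2" using n by simp
    finally have bb: "b * real n * r^(n-1) \<le> 1/2" .
    have "(1 - r^2) * (1/2 + b * real n * r^(n-1)) \<le> 1 * (1/2 + b * real n * r^(n-1))"
      using r2 bp r by (intro mult_right_mono) auto
    then show ?thesis using bb by simp
  qed
qed


lemma ineq4: fixes d X :: real assumes "d > 0" "72 * X < d" shows "18 * X / d < 1/4"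
  using assms by (simp add: divide_less_eq)

theorem theorem3p1:
  fixes t :: real
  assumes "t < 1"
  shows "\<exists>N::nat. N \<ge> 2 \<and> (\<forall>n\<ge>N. \<exists>(f :: complex \<Rightarrow> complex) (b :: nat \<Rightarrow> real).
            f holomorphic_on ball 0 1 \<and>
            (\<forall>z\<in>ball 0 1. (\<lambda>k. complex_of_real (b k) * z ^ k) sums f z) \<and>
            b 0 = 0 \<and> (\<forall>k. b k \<ge> 0) \<and> f 0 = 0 \<and>
            bloch f \<and> bloch_norm f \<le> 1 \<and>
            (\<Sum>k=1..n. real k powr t * \<bar>b k\<bar>\<^sup>2) > real n powr t * (B_const n)\<^sup>2)"
proof -
  define T where "T = max t 0"
  obtain N where N: "N \<ge> 2" "\<forall>n\<ge>N. 72 * real n powr T * ln (6 * real n) < real n - 1"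
    using asym[OF assms] unfolding T_def by blast
  have "\<forall>n\<ge>N. \<exists>(f :: complex \<Rightarrow> complex) (b :: nat \<Rightarrow> real).
            f holomorphic_on ball 0 1 \<and>
            (\<forall>z\<in>ball 0 1. (\<lambda>k. complex_of_real (b k) * z ^ k) sums f z) \<and>
            b 0 = 0 \<and> (\<forall>k. b k \<ge> 0) \<and> f 0 = 0 \<and>
            bloch f \<and> bloch_norm f \<le> 1 \<and>
            (\<Sum>k=1..n. real k powr t * \<bar>b k\<bar>\<^sup>2) > real n powr t * (B_const n)\<^sup>2"
  proof (intro allI impI)
    fix n assume nN: "n \<ge> N"
    have n: "n \<ge> 2" using nN N by simp
    have P: "72 * real n powr T * ln (6 * real n) < real n - 1" using nN N by simp
    define s where "s = 2 * ln (6 * real n) / (real n - 1)"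
    define bb where "bb = B_const n * (1 - s/2)"
    define c where "c = (\<lambda>k::nat. if k = 1 then 1/2 else if k = n then bb else (0::real))"
    define f where "f = (\<lambda>z::complex. complex_of_real (1/2) * z + complex_of_real bb * z ^ n)"
    have n1: "real n - 1 > 0" using n by simp
    have lnp: "ln (6 * real n) > 0" using n by simp
    have nT1: "real n powr T \<ge> 1" using n by (intro ge_one_powr_ge_zero) (auto simp: T_def)
    have s0: "s > 0" using n1 lnp by (simp add: s_def)
    have "72 * ln (6 * real n) \<le> 72 * real n powr T * ln (6 * real n)"
      using nT1 lnp by simp
    hence l72: "72 * ln (6 * real n) < real n - 1" using P by linarith
    have s1: "s < 1" using l72 n1 by (simp add: s_def field_simps)
    have B: "B_const n \<le> 3" "B_const n > 0" using B_le3[OF n] by auto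
    have bbp: "bb \<ge> 0" using B s1 by (simp add: bb_def)
    have c0: "\<forall>k. c k \<ge> 0" using bbp by (simp add: c_def)
    show "\<exists>(f :: complex \<Rightarrow> complex) (b :: nat \<Rightarrow> real).
            f holomorphic_on ball 0 1 \<and>
            (\<forall>z\<in>ball 0 1. (\<lambda>k. complex_of_real (b k) * z ^ k) sums f z) \<and>
            b 0 = 0 \<and> (\<forall>k. b k \<ge> 0) \<and> f 0 = 0 \<and>
            bloch f \<and> bloch_norm f \<le> 1 \<and>
            (\<Sum>k=1..n. real k powr t * \<bar>b k\<bar>\<^sup>2) > real n powr t * (B_const n)\<^sup>2"
    proof (intro exI conjI)
      show hol: "f holomorphic_on ball 0 1" unfolding f_def by (intro holomorphic_intros)
      show "\<forall>z\<in>ball 0 1. (\<lambda>k. complex_of_real (c k) * z ^ k) sums f z"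
      proof
        fix z :: complex assume "z \<in> ball 0 1"
        have "(\<lambda>k. complex_of_real (c k) * z ^ k) sums (\<Sum>k\<in>{1,n}. complex_of_real (c k) * z ^ k)"
          by (rule sums_finite) (auto simp: c_def)
        also have "(\<Sum>k\<in>{1,n}. complex_of_real (c k) * z ^ k) = f z"
          using n by (simp add: c_def f_def)
        finally show "(\<lambda>k. complex_of_real (c k) * z ^ k) sums f z" .
      qed
      show "c 0 = 0" using n by (simp add: c_def)
      show "\<forall>k. c k \<ge> 0" by (rule c0)
      show "f 0 = 0" using n by (simp add: f_def)
      have dv: "deriv f z = complex_of_real (1/2) + complex_of_real bb * of_nat n * z ^ (n-1)" for z
        unfolding f_def
        by (rule DERIV_imp_deriv) (auto intro!: derivative_eq_intros)
      have bnd: "(1 - (norm z)\<^sup>2) * norm (deriv f z) \<le> 1" if z: "z \<in> ball 0 1" for z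
      proof -
        have nz: "norm z < 1" using z by simp
        have "norm (deriv f z) \<le> norm (complex_of_real (1/2)) + norm (complex_of_real bb * of_nat n * z ^ (n-1))"
          unfolding dv by (rule norm_triangle_ineq)
        also have "\<dots> = 1/2 + bb * real n * norm z ^ (n-1)"
          using bbp by (simp add: norm_mult norm_power)
        finally have "norm (deriv f z) \<le> 1/2 + bb * real n * norm z ^ (n-1)" .
        hence "(1 - (norm z)\<^sup>2) * norm (deriv f z) \<le> (1 - (norm z)\<^sup>2) * (1/2 + bb * real n * norm z ^ (n-1))"
          using nz by (intro mult_left_mono) (auto simp: power_le_one abs_square_le_1)
        also have "\<dots> \<le> 1"
          by (rule radial[OF n _ nz s0 s1 s_def bb_def]) simp
        finally show ?thesis .
      qed
      show "bloch f" unfolding bloch_def using hol bnd by (auto intro!: bdd_aboveI2)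
      show "bloch_norm f \<le> 1" unfolding bloch_norm_def using `f 0 = 0` bnd
        by (auto intro!: cSUP_least)
      have g: "real k powr t * \<bar>c k\<bar>\<^sup>2 = (if k = 1 then 1/4 else 0) + (if k = n then real n powr t * bb^2 else 0)" for k
        using n by (cases "k=1"; cases "k=n") (simp_all add: c_def power2_eq_square)
      have F: "(\<Sum>k=1..n. real k powr t * \<bar>c k\<bar>\<^sup>2) = 1/4 + real n powr t * bb^2"
        unfolding g sum.distrib using n by simp
      have "real n powr t * (B_const n)\<^sup>2 - real n powr t * bb^2 = real n powr t * (B_const n)\<^sup>2 * (s - s^2/4)"
        by (simp add: bb_def power2_eq_square algebra_simps)
      also have "\<dots> \<le> real n powr T * 9 * s"
      proof -
        have "real n powr t \<le> real n powr T" using n by (intro powr_mono) (auto simp: T_def)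
        moreover have "(B_const n)\<^sup>2 \<le> 9" using B using power_mono[of "B_const n" 3 2] by simp
        moreover have "s - s^2/4 \<le> s" by simp
        ultimately show ?thesis using s0 s1 B
          by (intro mult_mono) (auto simp: power2_eq_square)
      qed
      also have "\<dots> = 18 * (real n powr T * ln (6 * real n)) / (real n - 1)"
        by (simp add: s_def)
      also have "\<dots> < 1/4" using ineq4[OF n1 P[unfolded mult.assoc]] by simp
      finally show "(\<Sum>k=1..n. real k powr t * \<bar>c k\<bar>\<^sup>2) > real n powr t * (B_const n)\<^sup>2"
        unfolding F by simp
    qed
  qed
  then show ?thesis using N by blast
qed

end
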